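(* Consider a one-site PTM cascade with $n=1$ layer (species $E,S^0,S^1,F,Y^0,Y^1$, constants $\delta,\gamma,\lambda$) and positive total amounts $\overline{E},\overline{F},\overline{S}$. Let $\Delta=\gamma\overline{F}-\delta\overline{E}$, $q_1(s)=1+\delta s$, $q_2(s)=\overline{E}-\Delta s$, $p(s)=\lambda\overline{F}q_1(s)+q_1(s)q_2(s)+(\gamma+\delta)\overline{F}q_2(s)$, and $\varphi(s)=\frac{s\,p(s)}{q_1(s)q_2(s)}$. Let $\Gamma=[0,\infty)$ if $\Delta\le0$ and $\Gamma=[0,\overline{E}/\Delta)$ if $\Delta>0$. Then: (i) the system has a unique BMSS; (ii) the restriction of $\varphi$ to $\Gamma$ is a continuous increasing bijection $\Gamma\to[0,\infty)$, and its inverse $\psi:[0,\infty)\to\Gamma$ is continuous, increasing, satisfies $\psi(0)=0$, and for every $\overline{S}>0$ the BMSS value of $S^1$ equals $\psi(\overline{S})$.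
   Context: For $n=1$ the one-site PTM cascade has species $E,S^0,S^1,F,Y^0,Y^1$ with reactions $E+S^0\rightleftharpoons Y^0\to E+S^1$ (rate constants $a^0,b^0,c^0$) and $F+S^1\rightleftharpoons Y^1\to F+S^0$ (rate constants $a^1,b^1,c^1$), all positive, mass-action kinetics. Put $\delta=a^1/(b^1+c^1)$, $\gamma=(c^1/c^0)\delta$, $\lambda=\frac{b^0+c^0}{a^0}\gamma$. A steady state for total amounts $\overline{E},\overline{F},\overline{S}$ is a real solution of $Y^0=\gamma FS^1$, $Y^1=\delta FS^1$, $\lambda FS^1=S^0E$, $\overline{F}=F+Y^1$, $\overline{E}=E+Y^0$, $\overline{S}=S^0+S^1+Y^0+Y^1$. A BMSS (biologically meaningful steady state) is a steady state with positive total amounts and all concentrations nonnegative. A function is called increasing if it is strictly increasing. *)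

theory Defs
  imports "HOL-Analysis.Analysis"
begin

text \<open>The reduced steady-state equations for the n = 1 PTM cascade, with constants
  delta, gamma, lambda (written d, g, l) and total amounts Eb, Fb, Sb.\<close>

definition ptm_steady_state ::
  "real \<Rightarrow> real \<Rightarrow> real \<Rightarrow> real \<Rightarrow> real \<Rightarrow> real \<Rightarrow>
   real \<times> real \<times> real \<times> real \<times> real \<times> real \<Rightarrow> bool" where
  "ptm_steady_state d g l Eb Fb Sb c =
     (case c of (E, S0, S1, F, Y0, Y1) \<Rightarrow>
        Y0 = g * F * S1 \<and> Y1 = d * F * S1 \<and> l * F * S1 = S0 * E \<and>
        Fb = F + Y1 \<and> Eb = E + Y0 \<and> Sb = S0 + S1 + Y0 + Y1)"

text \<open>Biologically meaningful steady state: positive totals, nonnegative concentrations.\<close>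

definition ptm_BMSS ::
  "real \<Rightarrow> real \<Rightarrow> real \<Rightarrow> real \<Rightarrow> real \<Rightarrow> real \<Rightarrow>
   real \<times> real \<times> real \<times> real \<times> real \<times> real \<Rightarrow> bool" where
  "ptm_BMSS d g l Eb Fb Sb c =
     (ptm_steady_state d g l Eb Fb Sb c \<and> Eb > 0 \<and> Fb > 0 \<and> Sb > 0 \<and>
      (case c of (E, S0, S1, F, Y0, Y1) \<Rightarrow>
        E \<ge> 0 \<and> S0 \<ge> 0 \<and> S1 \<ge> 0 \<and> F \<ge> 0 \<and> Y0 \<ge> 0 \<and> Y1 \<ge> 0))"

end

theory Submission
  imports Defs
begin

theorem mainTheorem3:
  fixes a0 b0 c0 a1 b1 c1 Eb Fb \<delta> \<gamma> lam \<Delta> :: real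
    and q1 q2 p \<phi> \<psi> :: "real \<Rightarrow> real" and \<Gamma> :: "real set"
  assumes "a0 > 0" "b0 > 0" "c0 > 0" "a1 > 0" "b1 > 0" "c1 > 0"
    and "Eb > 0" "Fb > 0"
    and "\<delta> = a1 / (b1 + c1)"
    and "\<gamma> = (c1 / c0) * \<delta>"
    and "lam = ((b0 + c0) / a0) * \<gamma>"
    and "\<Delta> = \<gamma> * Fb - \<delta> * Eb"
    and "\<And>s. q1 s = 1 + \<delta> * s"
    and "\<And>s. q2 s = Eb - \<Delta> * s"
    and "\<And>s. p s = lam * Fb * q1 s + q1 s * q2 s + (\<gamma> + \<delta>) * Fb * q2 s"
    and "\<And>s. \<phi> s = s * p s / (q1 s * q2 s)"
    and "\<Gamma> = (if \<Delta> \<le> 0 then {0..} else {0..<Eb / \<Delta>})"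
    and "\<psi> = inv_into \<Gamma> \<phi>"
  shows "(\<forall>Sb > 0. \<exists>!c. ptm_BMSS \<delta> \<gamma> lam Eb Fb Sb c)
       \<and> continuous_on \<Gamma> \<phi> \<and> strict_mono_on \<Gamma> \<phi> \<and> bij_betw \<phi> \<Gamma> {0..}
       \<and> continuous_on {0..} \<psi> \<and> strict_mono_on {0..} \<psi> \<and> \<psi> 0 = 0
       \<and> (\<forall>Sb > 0. \<forall>E S0 S1 F Y0 Y1.
            ptm_BMSS \<delta> \<gamma> lam Eb Fb Sb (E, S0, S1, F, Y0, Y1) \<longrightarrow> S1 = \<psi> Sb)"
proof -
  note A = assms
  have d: "\<delta> > 0" using A(4,5,6,9) by simp
  have g: "\<gamma> > 0" using A(3,6,10) d by simp
  have l: "lam > 0" using A(1,2,3,11) g by simp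
  have q1pos: "q1 s > 0" if "s \<ge> 0" for s
    using A(13)[of s] d that by (simp add: add_pos_nonneg)
  have Gam: "s \<in> \<Gamma> \<longleftrightarrow> 0 \<le> s \<and> q2 s > 0" for s
  proof (cases "\<Delta> \<le> 0")
    case True
    have "s \<ge> 0 \<Longrightarrow> \<Delta> * s \<le> 0" using True by (simp add: mult_nonpos_nonneg)
    then show ?thesis using True A(7,14,17) by auto
  next
    case False
    then have "s < Eb / \<Delta> \<longleftrightarrow> \<Delta> * s < Eb" by (simp add: pos_less_divide_eq mult.commute)
    then show ?thesis using False A(14,17) by auto
  qed
  have phiexp: "\<phi> s = s + lam*Fb*(s/q2 s) + (\<gamma>+\<delta>)*Fb*(s/q1 s)" if "s \<in> \<Gamma>" for s
  proof -
    have "q1 s > 0" "q2 s > 0" using Gam that q1pos by auto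
    then show ?thesis using A(15,16)[of s] by (simp add: field_simps)
  qed
  have phinn: "\<phi> s \<ge> 0" if "s \<in> \<Gamma>" for s
  proof -
    have "q1 s > 0" "q2 s > 0" "s \<ge> 0" using Gam that q1pos by auto
    then show ?thesis using phiexp[OF that] l g d A(8) by (simp add: add_nonneg_nonneg)
  qed
  have smono: "\<phi> s < \<phi> t" if "s \<in> \<Gamma>" "t \<in> \<Gamma>" "s < t" for s t
  proof -
    have p: "q1 s > 0" "q2 s > 0" "s \<ge> 0" "q1 t > 0" "q2 t > 0" using Gam that q1pos by auto
    have "s * q2 t - t * q2 s = (s - t) * Eb" by (simp add: A(14) algebra_simps)
    moreover have "(s - t) * Eb \<le> 0" using A(7) that(3) by (simp add: mult_nonpos_nonneg)
    ultimately have "s * q2 t \<le> t * q2 s" by linarith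
    then have m1: "s/q2 s \<le> t/q2 t" using p by (simp add: divide_simps mult.commute)
    have "s * q1 t - t * q1 s = s - t" by (simp add: A(13) algebra_simps)
    then have "s * q1 t \<le> t * q1 s" using that(3) by linarith
    then have m2: "s/q1 s \<le> t/q1 t" using p by (simp add: divide_simps mult.commute)
    have "lam*Fb*(s/q2 s) \<le> lam*Fb*(t/q2 t)" using m1 l A(8) by (intro mult_left_mono) auto
    moreover have "(\<gamma>+\<delta>)*Fb*(s/q1 s) \<le> (\<gamma>+\<delta>)*Fb*(t/q1 t)" using m2 g d A(8) by (intro mult_left_mono) auto
    ultimately show ?thesis using phiexp that by simp
  qed
  have SM: "strict_mono_on \<Gamma> \<phi>" using smono by (simp add: strict_mono_on_def)
  have inj: "inj_on \<phi> \<Gamma>" by (rule strict_mono_on_imp_inj_on[OF SM])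
  have CONT: "continuous_on \<Gamma> \<phi>"
  proof -
    have "continuous_on \<Gamma> (\<lambda>s. s + lam*Fb*(s/(Eb - \<Delta> * s)) + (\<gamma>+\<delta>)*Fb*(s/(1 + \<delta> * s)))"
      using Gam q1pos A(13,14) by (intro continuous_intros) (auto simp: less_imp_neq[symmetric] dest: less_imp_neq)
    then show ?thesis by (rule continuous_on_cong[THEN iffD1, rotated 2]) (auto simp: phiexp A(13,14))
  qed

  have phi0: "\<phi> 0 = 0" using A(16)[of 0] by simp
  have zG: "0 \<in> \<Gamma>" using Gam A(14)[of 0] A(7) by simp
  have conv: "x \<in> \<Gamma>" if "t \<in> \<Gamma>" "0 \<le> x" "x \<le> t" for x t
  proof -
    have "q2 t > 0" using Gam that by auto
    have "q2 x > 0"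
    proof (cases "\<Delta> \<le> 0")
      case True
      then have "\<Delta> * x \<le> 0" using that by (simp add: mult_nonpos_nonneg)
      then show ?thesis using A(14)[of x] A(7) by simp
    next
      case False
      then have "\<Delta> * x \<le> \<Delta> * t" using that by (intro mult_left_mono) auto
      then show ?thesis using A(14)[of x] A(14)[of t] \<open>q2 t > 0\<close> by simp
    qed
    then show ?thesis using Gam that by auto
  qed
  have surj: "\<exists>s\<in>\<Gamma>. \<phi> s = y" if y: "y \<ge> 0" for y
  proof -
    have "\<exists>t\<in>\<Gamma>. y \<le> \<phi> t"
    proof (cases "\<Delta> \<le> 0")
      case True
      then have "\<Delta> * y \<le> 0" using y by (simp add: mult_nonpos_nonneg)
      then have yG: "y \<in> \<Gamma>" using A(14)[of y] A(7) Gam y by simp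
      have "q1 y > 0" "q2 y > 0" using Gam yG q1pos y by auto
      then have "0 \<le> lam*Fb*(y/q2 y) + (\<gamma>+\<delta>)*Fb*(y/q1 y)" using l g d A(8) y
        by (simp add: add_nonneg_nonneg)
      then show ?thesis using yG phiexp[OF yG] by (intro bexI[of _ y]) auto
    next
      case False
      define t where "t = y*Eb/(lam*Fb + y*\<Delta>)"
      have den: "lam*Fb + y*\<Delta> > 0" using False l A(8) y
        by (simp add: add_pos_nonneg)
      have t0: "t \<ge> 0" using den y A(7) unfolding t_def by simp
      have q2t: "q2 t = Eb*lam*Fb/(lam*Fb + y*\<Delta>)" using den unfolding t_def A(14)
        by (simp add: field_simps)
      have q2tp: "q2 t > 0" unfolding q2t using den A(7,8) l by simp
      have tG: "t \<in> \<Gamma>" using Gam t0 q2tp by simp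
      have "lam*Fb*t = y*q2 t" by (simp only: q2t) (simp add: t_def mult_ac)
      then have "lam*Fb*(t/q2 t) = y" using q2tp
        by (metis nonzero_mult_div_cancel_right less_irrefl times_divide_eq_right)
      moreover have "q1 t > 0" using q1pos t0 by simp
      ultimately have "y \<le> \<phi> t" using phiexp[OF tG] t0 g d A(8) q2tp
        by (simp add: add_nonneg_nonneg)
      then show ?thesis using tG by blast
    qed
    then obtain t where tG: "t \<in> \<Gamma>" and yt: "y \<le> \<phi> t" by blast
    have t0: "t \<ge> 0" using tG Gam by auto
    have sub: "{0..t} \<subseteq> \<Gamma>" using conv tG by auto
    have "continuous_on {0..t} \<phi>" using CONT sub by (rule continuous_on_subset)
    then obtain x where "0 \<le> x" "x \<le> t" "\<phi> x = y"
      using IVT'[of \<phi> 0 y t] phi0 y yt t0 by auto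
    then show ?thesis using sub by auto
  qed
  have img: "\<phi> ` \<Gamma> = {0..}" using surj phinn by fastforce
  have BIJ: "bij_betw \<phi> \<Gamma> {0..}" using inj img by (simp add: bij_betw_def)
  have psiG: "\<psi> y \<in> \<Gamma>" and phipsi: "\<phi> (\<psi> y) = y" if "y \<ge> 0" for y
    using that img A(18) by (auto intro: inv_into_into f_inv_into_f)
  have psiphi: "\<psi> (\<phi> s) = s" if "s \<in> \<Gamma>" for s
    using inj that A(18) by (simp add: inv_into_f_f)
  have psi0: "\<psi> 0 = 0" using psiphi[OF zG] phi0 by simp
  have PSM: "strict_mono_on {0..} \<psi>"
  proof (rule strict_mono_onI)
    fix x y :: real assume "x \<in> {0..}" "y \<in> {0..}" "x < y"
    then show "\<psi> x < \<psi> y"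
      using smono[of "\<psi> y" "\<psi> x"] psiG phipsi by (metis atLeast_iff less_le_not_le linorder_neqE_linordered_idom order_less_imp_le)
  qed
  have PCONT: "continuous_on {0..} \<psi>"
    unfolding continuous_on_eq_continuous_within
  proof
    fix y0 :: real assume "y0 \<in> {0..}"
    then have y0: "y0 \<ge> 0" by simp
    define b where "b = \<psi> (y0 + 1)"
    have bG: "b \<in> \<Gamma>" using psiG y0 unfolding b_def by simp
    have b0: "b \<ge> 0" using bG Gam by auto
    have sub: "{0..b} \<subseteq> \<Gamma>" using conv bG by auto
    have cK: "continuous_on {0..b} \<phi>" using CONT sub by (rule continuous_on_subset)
    have imK: "\<phi> ` {0..b} = {0..y0+1}"
    proof
      show "\<phi> ` {0..b} \<subseteq> {0..y0+1}"
      proof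
        fix z assume "z \<in> \<phi> ` {0..b}"
        then obtain x where x: "x \<in> {0..b}" "z = \<phi> x" by auto
        have "\<phi> x \<le> \<phi> b" using smono[of x b] x sub bG by (cases "x = b") force+
        then show "z \<in> {0..y0+1}" using phinn x sub phipsi[of "y0+1"] y0 unfolding b_def by auto
      qed
    next
      show "{0..y0+1} \<subseteq> \<phi> ` {0..b}"
      proof
        fix z assume z: "z \<in> {0..y0+1}"
        then obtain x where "0 \<le> x" "x \<le> b" "\<phi> x = z"
          using IVT'[of \<phi> 0 z b] phi0 phipsi[of "y0+1"] y0 cK b0 unfolding b_def by auto
        then show "z \<in> \<phi> ` {0..b}" by auto
      qed
    qed
    have "continuous_on (\<phi> ` {0..b}) \<psi>"
      by (rule continuous_on_inv[OF cK]) (use psiphi sub in auto)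
    then have "continuous_on {0..y0+1} \<psi>" using imK by simp
    then have "continuous (at y0 within {0..y0+1}) \<psi>" using y0
      unfolding continuous_on_eq_continuous_within by auto
    moreover have "at y0 within {0..} = at y0 within {0..y0+1}"
      by (rule at_within_nhd[where S="{y0 - 1 <..< y0 + 1}"]) auto
    ultimately show "continuous (at y0 within {0..}) \<psi>" by simp
  qed
  define canon where "canon s = (q2 s / q1 s, lam * Fb * s / q2 s, s, Fb / q1 s, \<gamma> * (Fb / q1 s) * s, \<delta> * (Fb / q1 s) * s)" for s
  have char: "S1 \<in> \<Gamma> \<and> \<phi> S1 = Sb \<and> (E,S0,S1,F,Y0,Y1) = canon S1"
    if h: "ptm_BMSS \<delta> \<gamma> lam Eb Fb Sb (E,S0,S1,F,Y0,Y1)" for Sb E S0 S1 F Y0 Y1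
  proof -
    have e1: "Y0 = \<gamma> * F * S1" and e2: "Y1 = \<delta> * F * S1" and e3: "lam * F * S1 = S0 * E"
      and e4: "Fb = F + Y1" and e5: "Eb = E + Y0" and e6: "Sb = S0 + S1 + Y0 + Y1"
      and nn: "E \<ge> 0" "S0 \<ge> 0" "S1 \<ge> 0" "F \<ge> 0"
      using h unfolding ptm_BMSS_def ptm_steady_state_def by auto
    have q1p: "q1 S1 > 0" using q1pos nn by simp
    have Fq: "F * q1 S1 = Fb" using e4 e2 A(13)[of S1] by (simp add: algebra_simps)
    have Fe: "F = Fb / q1 S1" using Fq q1p by (simp add: field_simps)
    have Fp: "F > 0" using Fq A(8) nn q1p by (metis less_eq_real_def mult_zero_left)
    have "q2 S1 = Eb - (\<gamma>*Fb - \<delta>*Eb)*S1" by (simp add: A(12,14))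
    also have "\<dots> = (E + \<gamma>*F*S1) - (\<gamma>*(F + \<delta>*F*S1) - \<delta>*(E + \<gamma>*F*S1))*S1"
      by (simp only: e4 e5 e1 e2)
    also have "\<dots> = E * q1 S1" by (simp add: A(13) algebra_simps)
    finally have Eq: "E * q1 S1 = q2 S1" by simp
    have q2nn: "q2 S1 \<ge> 0" using Eq nn q1p by (metis mult_nonneg_nonneg less_eq_real_def)
    have q2p: "q2 S1 > 0"
    proof (rule ccontr)
      assume "\<not> q2 S1 > 0"
      then have "q2 S1 = 0" using q2nn by simp
      then have "E = 0" using Eq q1p by simp
      then have "S1 = 0" using e3 Fp l by simp
      then show False using \<open>q2 S1 = 0\<close> A(14)[of S1] A(7) by simp
    qed
    have S0q: "S0 * q2 S1 = lam * Fb * S1" using Eq e3 Fq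
      by (metis mult.assoc mult.commute)
    have S0e: "S0 = lam*Fb*S1/q2 S1" using S0q q2p by (simp add: field_simps)
    have G: "S1 \<in> \<Gamma>" using Gam nn q2p by simp
    have Ee: "E = q2 S1 / q1 S1" using Eq q1p by (simp add: field_simps)
    have "\<phi> S1 = S1 + S0 + (\<gamma>+\<delta>)*F*S1" using phiexp[OF G] S0e Fe
      by (simp add: algebra_simps add_divide_distrib)
    then have "\<phi> S1 = Sb" using e6 e1 e2 by (simp add: algebra_simps)
    moreover have "(E,S0,S1,F,Y0,Y1) = canon S1" unfolding canon_def using Ee S0e Fe e1 e2 by simp
    ultimately show ?thesis using G by simp
  qed
  have ex: "ptm_BMSS \<delta> \<gamma> lam Eb Fb Sb (canon s)" if "Sb > 0" "s \<in> \<Gamma>" "\<phi> s = Sb" for Sb s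
  proof -
    have p: "q1 s > 0" "q2 s > 0" "s \<ge> 0" using Gam that q1pos by auto
    have "q2 s + \<gamma> * Fb * s = Eb * q1 s" unfolding A(12,13,14) by (simp add: algebra_simps)
    then have "Eb = (q2 s + \<gamma> * Fb * s) / q1 s" using p by (simp add: field_simps)
    then have "Eb = q2 s / q1 s + \<gamma> * (Fb / q1 s) * s" by (simp add: add_divide_distrib)
    moreover have "Fb = Fb / q1 s + \<delta> * (Fb / q1 s) * s"
    proof -
      have x: "\<And>x. x * (1 + \<delta> * s) = x + \<delta> * x * s" by (simp add: algebra_simps)
      have "Fb / q1 s + \<delta> * (Fb / q1 s) * s = (Fb / q1 s) * q1 s" using x[of "Fb / q1 s"] A(13)[of s] by simp
      then show ?thesis using p by simp
    qed
    moreover have "lam * (Fb / q1 s) * s = lam * Fb * s / q2 s * (q2 s / q1 s)" using p by (simp add: field_simps)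
    moreover have "Sb = lam * Fb * s / q2 s + s + \<gamma> * (Fb / q1 s) * s + \<delta> * (Fb / q1 s) * s"
      using phiexp[OF that(2)] that(3) by (simp add: algebra_simps)
    ultimately show ?thesis unfolding ptm_BMSS_def ptm_steady_state_def canon_def
      using that(1) A(7,8) p l g d by (simp add: mult_nonneg_nonneg)
  qed
  have P1: "\<forall>Sb > 0. \<exists>!c. ptm_BMSS \<delta> \<gamma> lam Eb Fb Sb c"
  proof (intro allI impI)
    fix Sb :: real assume Sb: "Sb > 0"
    show "\<exists>!c. ptm_BMSS \<delta> \<gamma> lam Eb Fb Sb c"
    proof (rule ex1I[of _ "canon (\<psi> Sb)"])
      show "ptm_BMSS \<delta> \<gamma> lam Eb Fb Sb (canon (\<psi> Sb))" using ex Sb psiG phipsi by simp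
    next
      fix c assume c: "ptm_BMSS \<delta> \<gamma> lam Eb Fb Sb c"
      obtain E S0 S1 F Y0 Y1 where ce: "c = (E,S0,S1,F,Y0,Y1)" by (cases c) auto
      have "S1 \<in> \<Gamma>" "\<phi> S1 = Sb" "c = canon S1" using char[of Sb E S0 S1 F Y0 Y1] c ce by auto
      then show "c = canon (\<psi> Sb)" using psiphi by metis
    qed
  qed
  have P8: "\<forall>Sb > 0. \<forall>E S0 S1 F Y0 Y1.
            ptm_BMSS \<delta> \<gamma> lam Eb Fb Sb (E, S0, S1, F, Y0, Y1) \<longrightarrow> S1 = \<psi> Sb"
    using char psiphi by metis
  show ?thesis using P1 CONT SM BIJ PCONT PSM psi0 P8 by blast
qed

end
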